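(* Let $b\ge 2$ and $m\ge 0$ be integers. Consider the following nondeterministic procedure. Set $\mathcal U_1=[0,1)^2$. For $n=1,2,\ldots$: if $\mathcal U_n=\emptyset$, stop; otherwise choose an arbitrary box $X_n=\prod_{j=1}^2\left[\frac{u_j(n)}{b^m},\frac{u_j(n)+1}{b^m}\right)\subseteq \mathcal U_n$ with $u_j(n)\in\{0,1,\ldots,b^m-1\}$, and set $\mathcal U_{n+1}=\mathcal U_n\setminus\bigcup_{E\in\mathcal E_m(X_n)}E$. Then, regardless of the choices made, the procedure stops after exactly $b^m$ boxes have been chosen.
   Context: An elementary $b$-adic interval in $[0,1)^s$ is a set $\prod_{j=1}^s\left[\frac{a_j}{b^{d_j}},\frac{a_j+1}{b^{d_j}}\right)$ with $d_j\in\mathbb N_0$ and $a_j\in\{0,1,\ldots,b^{d_j}-1\}$; its volume is $b^{-(d_1+\cdots+d_s)}$. For a box $X=\prod_{j=1}^s\left[\frac{u_j}{b^m},\frac{u_j+1}{b^m}\right)$, $\mathcal E_m(X)$ denotes the set of all elementary $b$-adic intervals of volume $b^{-m}$ that contain $X$ as a subset. *)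

theory Defs
  imports Complex_Main
begin

definition unit_sq :: "(real \<times> real) set" where
  "unit_sq = {p. 0 \<le> fst p \<and> fst p < 1 \<and> 0 \<le> snd p \<and> snd p < 1}"

definition elem_int :: "nat \<Rightarrow> nat \<times> nat \<Rightarrow> nat \<times> nat \<Rightarrow> (real \<times> real) set" where
  "elem_int b d a = {p.
      real (fst a) / real b ^ fst d \<le> fst p \<and> fst p < (real (fst a) + 1) / real b ^ fst d \<and>
      real (snd a) / real b ^ snd d \<le> snd p \<and> snd p < (real (snd a) + 1) / real b ^ snd d}"

definition is_elem_int :: "nat \<Rightarrow> (real \<times> real) set \<Rightarrow> bool" where
  "is_elem_int b E \<longleftrightarrow> (\<exists>d a. fst a < b ^ fst d \<and> snd a < b ^ snd d \<and> E = elem_int b d a)"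

definition elem_vol :: "nat \<Rightarrow> nat \<times> nat \<Rightarrow> real" where
  "elem_vol b d = 1 / real b ^ (fst d + snd d)"

definition Em :: "nat \<Rightarrow> nat \<Rightarrow> (real \<times> real) set \<Rightarrow> (real \<times> real) set set" where
  "Em b m X = {E. \<exists>d a. fst a < b ^ fst d \<and> snd a < b ^ snd d \<and> E = elem_int b d a
                       \<and> elem_vol b d = 1 / real b ^ m \<and> X \<subseteq> E}"

definition grid_boxes :: "nat \<Rightarrow> nat \<Rightarrow> (real \<times> real) set set" where
  "grid_boxes b m = {elem_int b (m, m) u | u. fst u < b ^ m \<and> snd u < b ^ m}"

definition U_step :: "nat \<Rightarrow> nat \<Rightarrow> (real \<times> real) set \<Rightarrow> (real \<times> real) set \<Rightarrow> (real \<times> real) set" where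
  "U_step b m U X = U - \<Union> (Em b m X)"

definition U_after :: "nat \<Rightarrow> nat \<Rightarrow> (real \<times> real) set list \<Rightarrow> (real \<times> real) set" where
  "U_after b m xs = foldl (U_step b m) unit_sq xs"

text \<open>A legal run of the procedure: each chosen box is a grid box contained in the current U
  (which is then necessarily nonempty, so the procedure had not stopped).\<close>
definition valid_run :: "nat \<Rightarrow> nat \<Rightarrow> (real \<times> real) set list \<Rightarrow> bool" where
  "valid_run b m xs \<longleftrightarrow>
     (\<forall>i < length xs. xs ! i \<in> grid_boxes b m \<and> U_after b m (take i xs) \<noteq> {}
                     \<and> xs ! i \<subseteq> U_after b m (take i xs))"

end

theory Submission
  imports Defs
begin


definition clash :: "nat \<Rightarrow> nat \<Rightarrow> nat \<times> nat \<Rightarrow> nat \<times> nat \<Rightarrow> bool" where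
  "clash b n u v \<longleftrightarrow> (\<exists>k\<le>n. fst u div b^k = fst v div b^k \<and> snd u div b^(n-k) = snd v div b^(n-k))"

lemma clash_refl: "clash b n u u" unfolding clash_def by auto

lemma clash_sym: "clash b n u v \<Longrightarrow> clash b n v u" unfolding clash_def by metis

lemma div_split:
  fixes x x' b :: nat
  assumes "b > 0" "k \<le> m"
  shows "(x div b^k = x' div b^k) \<longleftrightarrow> (x div b^m = x' div b^m \<and> (x mod b^m) div b^k = (x' mod b^m) div b^k)"
proof -
  define c where "c = b^(m-k)"
  have bm: "b^m = b^k * c" using assms unfolding c_def by (simp add: power_add[symmetric])
  have 1: "z div b^m = (z div b^k) div c" for z by (simp add: bm div_mult2_eq)
  have 2: "(z mod b^m) div b^k = (z div b^k) mod c" for z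
    using assms by (simp add: bm mod_mult2_eq)
  have 3: "(a::nat) = a' \<longleftrightarrow> a div c = a' div c \<and> a mod c = a' mod c" for a a'
    by (metis div_mult_mod_eq)
  show ?thesis using 1 2 3 by metis
qed

lemma clash_Suc:
  assumes "b > 0" "fst u < b^Suc m" "fst v < b^Suc m"
  shows "clash b (Suc m) u v \<longleftrightarrow> snd u = snd v \<or>
     (fst u div b^m = fst v div b^m \<and> clash b m (fst u mod b^m, snd u div b) (fst v mod b^m, snd v div b))"
proof -
  have y: "snd w div b^(Suc m - k) = snd w div b div b^(m-k)" if "k \<le> m" for w :: "nat \<times> nat" and k
    using that by (simp add: Suc_diff_le div_mult2_eq)
  show ?thesis
  proof
    assume "clash b (Suc m) u v"
    then obtain k where k: "k \<le> Suc m" "fst u div b^k = fst v div b^k" "snd u div b^(Suc m-k) = snd v div b^(Suc m-k)"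
      unfolding clash_def by blast
    show "snd u = snd v \<or> (fst u div b^m = fst v div b^m \<and> clash b m (fst u mod b^m, snd u div b) (fst v mod b^m, snd v div b))"
    proof (cases "k = Suc m")
      case True thus ?thesis using k by simp
    next
      case False
      hence km: "k \<le> m" using k by simp
      have "fst u div b^m = fst v div b^m \<and> (fst u mod b^m) div b^k = (fst v mod b^m) div b^k"
        using div_split[OF assms(1) km] k by blast
      moreover have "snd u div b div b^(m-k) = snd v div b div b^(m-k)" using k y[OF km] by metis
      ultimately have "clash b m (fst u mod b^m, snd u div b) (fst v mod b^m, snd v div b)"
        unfolding clash_def using km by (intro exI[of _ k]) simp
      thus ?thesis using \<open>fst u div b^m = fst v div b^m \<and> _\<close> by blast
    qed
  next
    assume h: "snd u = snd v \<or> (fst u div b^m = fst v div b^m \<and> clash b m (fst u mod b^m, snd u div b) (fst v mod b^m, snd v div b))"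
    show "clash b (Suc m) u v"
    proof (cases "snd u = snd v")
      case True
      have "fst u div b^Suc m = 0" "fst v div b^Suc m = 0" using assms by auto
      thus ?thesis unfolding clash_def using True by (intro exI[of _ "Suc m"]) auto
    next
      case False
      with h have t: "fst u div b^m = fst v div b^m" and c: "clash b m (fst u mod b^m, snd u div b) (fst v mod b^m, snd v div b)" by auto
      from c obtain k where k: "k \<le> m" "(fst u mod b^m) div b^k = (fst v mod b^m) div b^k"
         "snd u div b div b^(m-k) = snd v div b div b^(m-k)" unfolding clash_def by auto
      have "fst u div b^k = fst v div b^k" using div_split[OF assms(1) k(1)] t k(2) by blast
      moreover have "snd u div b^(Suc m-k) = snd v div b^(Suc m-k)" using y[OF k(1)] k(3) by metis
      ultimately show ?thesis unfolding clash_def using k(1) by (intro exI[of _ k]) auto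
    qed
  qed
qed

lemma free_exists:
  assumes "b > 0"
  shows "\<forall>S y0. S \<subseteq> {..<b^m} \<times> {..<b^m} \<longrightarrow> (\<forall>u\<in>S. \<forall>v\<in>S. u \<noteq> v \<longrightarrow> \<not> clash b m u v)
     \<longrightarrow> y0 < b^m \<longrightarrow> y0 \<notin> snd ` S \<longrightarrow> (\<exists>x<b^m. \<forall>u\<in>S. \<not> clash b m u (x, y0))"
proof (induction m)
  case 0
  show ?case
  proof (intro allI impI)
    fix S :: "(nat\<times>nat) set" and y0 :: nat
    assume "S \<subseteq> {..<b^0} \<times> {..<b^0}" "y0 < b^0" "y0 \<notin> snd ` S"
    hence "S = {}" by force
    thus "\<exists>x<b^0. \<forall>u\<in>S. \<not> clash b 0 u (x, y0)" by auto
  qed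
next
  case (Suc m)
  show ?case
  proof (intro allI impI)
    fix S :: "(nat\<times>nat) set" and y0 :: nat
    assume S: "S \<subseteq> {..<b^Suc m} \<times> {..<b^Suc m}"
      and pw: "\<forall>u\<in>S. \<forall>v\<in>S. u \<noteq> v \<longrightarrow> \<not> clash b (Suc m) u v"
      and y0: "y0 < b^Suc m" and ny: "y0 \<notin> snd ` S"
    define B where "B = b^m"
    have B0: "B > 0" using assms B_def by simp
    define yt where "yt = y0 div b"
    define T where "T = {u\<in>S. snd u div b = yt}"
    have finS: "finite S" using S finite_subset by blast
    have finT: "finite T" using finS T_def by auto
    have injs: "inj_on snd T"
    proof (rule inj_onI)
      fix u v assume uv: "u \<in> T" "v \<in> T" "snd u = snd v"
      show "u = v"
      proof (rule ccontr)
        assume "u \<noteq> v"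
        hence "\<not> clash b (Suc m) u v" using pw uv T_def by auto
        moreover have "clash b (Suc m) u v" using uv S T_def assms
          by (subst clash_Suc) auto
        ultimately show False by simp
      qed
    qed
    have "snd ` T \<subseteq> {yt*b..<yt*b+b} - {y0}"
    proof
      fix y assume "y \<in> snd ` T"
      then obtain u where u: "u \<in> T" "y = snd u" by auto
      have "y \<noteq> y0" using u ny T_def by auto
      moreover have "y div b = yt" using u T_def by auto
      ultimately show "y \<in> {yt*b..<yt*b+b} - {y0}"
        using assms by (metis Diff_iff atLeastLessThan_iff div_times_less_eq_dividend
            dividend_less_times_div mult.commute singletonD add.commute)
    qed
    moreover have "y0 \<in> {yt*b..<yt*b+b}" unfolding yt_def using assms
      by (metis atLeastLessThan_iff div_times_less_eq_dividend dividend_less_times_div mult.commute add.commute)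
    ultimately have "card (snd ` T) \<le> card ({yt*b..<yt*b+b} - {y0})"
      by (intro card_mono) auto
    also have "\<dots> = b - 1" using \<open>y0 \<in> _\<close> by simp
    finally have "card (snd ` T) \<le> b - 1" .
    hence cT: "card T \<le> b - 1" using card_image[OF injs] by simp
    have "card ((\<lambda>u. fst u div B) ` T) \<le> b - 1" using cT card_image_le[OF finT] le_trans by blast
    hence "\<not> {..<b} \<subseteq> (\<lambda>u. fst u div B) ` T"
    proof (intro notI)
      assume "card ((\<lambda>u. fst u div B) ` T) \<le> b - 1" "{..<b} \<subseteq> (\<lambda>u. fst u div B) ` T"
      hence "card {..<b} \<le> b - 1" using card_mono finT finite_imageI le_trans by metis
      thus False using assms by simp
    qed
    then obtain c where c: "c < b" "c \<notin> (\<lambda>u. fst u div B) ` T" by auto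
    define Sc where "Sc = {u\<in>S. fst u div B = c}"
    define red where "red = (\<lambda>u::nat\<times>nat. (fst u mod B, snd u div b))"
    define R where "R = red ` Sc"
    have clS: "clash b (Suc m) u v \<longleftrightarrow> snd u = snd v \<or> (fst u div B = fst v div B \<and> clash b m (red u) (red v))"
      if "fst u < b^Suc m" "fst v < b^Suc m" for u v
      using clash_Suc[OF assms that] unfolding B_def red_def by simp
    have bSuc: "b^Suc m = b * B" unfolding B_def by simp
    have R1: "R \<subseteq> {..<b^m} \<times> {..<b^m}"
    proof
      fix r assume "r \<in> R"
      then obtain u where u: "u \<in> Sc" "r = red u" using R_def by auto
      have "snd u < B * b" using u Sc_def S bSuc by (auto simp: mult.commute)
      hence "snd u div b < B" by (simp add: less_mult_imp_div_less)
      thus "r \<in> {..<b^m} \<times> {..<b^m}" using u B0 unfolding red_def B_def by auto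
    qed
    have R2: "\<forall>r1\<in>R. \<forall>r2\<in>R. r1 \<noteq> r2 \<longrightarrow> \<not> clash b m r1 r2"
    proof (intro ballI impI)
      fix r1 r2 assume r: "r1 \<in> R" "r2 \<in> R" "r1 \<noteq> r2"
      then obtain u v where uv: "u \<in> Sc" "v \<in> Sc" "r1 = red u" "r2 = red v" using R_def by auto
      hence "u \<noteq> v" using r by auto
      hence "\<not> clash b (Suc m) u v" using pw uv Sc_def by auto
      moreover have "fst u div B = fst v div B" using uv Sc_def by auto
      moreover have "fst u < b^Suc m" "fst v < b^Suc m" using uv Sc_def S by auto
      ultimately show "\<not> clash b m r1 r2" using clS uv by auto
    qed
    have yt1: "yt < b^m" using y0 bSuc unfolding yt_def B_def by (simp add: less_mult_imp_div_less mult.commute)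
    have yt2: "yt \<notin> snd ` R"
    proof
      assume "yt \<in> snd ` R"
      then obtain u where u: "u \<in> Sc" "snd (red u) = yt" using R_def by auto
      hence "u \<in> T" using Sc_def T_def red_def by auto
      thus False using c u Sc_def by auto
    qed
    obtain xt where xt: "xt < b^m" "\<forall>r\<in>R. \<not> clash b m r (xt, yt)"
      using Suc.IH[THEN spec[of _ R], THEN spec[of _ yt]] R1 R2 yt1 yt2 by blast
    define x where "x = c * B + xt"
    have xB: "x div B = c" "x mod B = xt" using xt B0 unfolding x_def B_def by auto
    have "x < (c+1) * B" using xt unfolding x_def B_def by simp
    also have "\<dots> \<le> b * B" using c(1) by (intro mult_le_mono1) simp
    finally have xlt: "x < b^Suc m" using bSuc by metis
    have "\<forall>u\<in>S. \<not> clash b (Suc m) u (x, y0)"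
    proof
      fix u assume u: "u \<in> S"
      have "fst u < b^Suc m" using u S by auto
      hence cl: "clash b (Suc m) u (x,y0) \<longleftrightarrow> snd u = y0 \<or> (fst u div B = c \<and> clash b m (red u) (xt, yt))"
        using clS[of u "(x,y0)"] xlt xB unfolding red_def yt_def by simp
      have "snd u \<noteq> y0" using u ny by force
      moreover have "\<not> clash b m (red u) (xt, yt)" if "fst u div B = c"
      proof -
        have "u \<in> Sc" using that u Sc_def by simp
        hence "red u \<in> R" using R_def by simp
        thus ?thesis using xt(2) by blast
      qed
      ultimately show "\<not> clash b (Suc m) u (x, y0)" using cl by blast
    qed
    thus "\<exists>x<b^Suc m. \<forall>u\<in>S. \<not> clash b (Suc m) u (x, y0)" using xlt by blast
  qed
qed



definition ci :: "nat \<Rightarrow> nat \<Rightarrow> real \<times> real \<Rightarrow> nat \<times> nat" where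
  "ci b m p = (nat \<lfloor>real b ^ m * fst p\<rfloor>, nat \<lfloor>real b ^ m * snd p\<rfloor>)"

lemma iv:
  assumes "N > 0"
  shows "(real a / N \<le> t \<and> t < (real a + 1) / N) \<longleftrightarrow> \<lfloor>N * t\<rfloor> = int a"
  using assms by (simp add: floor_eq_iff field_simps)

lemma mem_elem_int:
  assumes "b > 0"
  shows "p \<in> elem_int b d a \<longleftrightarrow> \<lfloor>real b ^ fst d * fst p\<rfloor> = int (fst a) \<and> \<lfloor>real b ^ snd d * snd p\<rfloor> = int (snd a)"
proof -
  have N1: "real b ^ fst d > 0" "real b ^ snd d > 0" using assms by auto
  show ?thesis unfolding elem_int_def using iv[OF N1(1), of "fst a" "fst p"] iv[OF N1(2), of "snd a" "snd p"]
    by auto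
qed

lemma fl:
  assumes "b > 0" "j \<le> m"
  shows "\<lfloor>real b ^ j * t\<rfloor> = \<lfloor>real b ^ m * t\<rfloor> div int (b^(m-j))"
proof -
  have e: "real b ^ m = real b ^ j * real b ^ (m-j)" using assms(2) by (simp add: power_add[symmetric])
  have "real b ^ j * t = real b ^ m * t / real_of_int (int (b^(m-j)))"
    using assms unfolding e by simp
  thus ?thesis using floor_divide_real_eq_div[of "int (b^(m-j))" "real b ^ m * t"] by simp
qed

lemma ci_cell:
  assumes "b > 0" "q \<in> elem_int b (m,m) u" "fst u < b^m" "snd u < b^m"
  shows "ci b m q = u" "q \<in> unit_sq"
proof -
  have f: "\<lfloor>real b ^ m * fst q\<rfloor> = int (fst u)" "\<lfloor>real b ^ m * snd q\<rfloor> = int (snd u)"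
    using assms(2) mem_elem_int[OF assms(1)] by auto
  thus "ci b m q = u" unfolding ci_def by (simp add: prod_eq_iff)
  have B: "real b ^ m > 0" using assms by simp
  have "real (fst u) \<le> real b ^ m * fst q" "real b ^ m * fst q < real (fst u) + 1"
    "real (snd u) \<le> real b ^ m * snd q" "real b ^ m * snd q < real (snd u) + 1"
    using f by (simp_all add: floor_eq_iff)
  moreover have "real (fst u) + 1 \<le> real b ^ m" "real (snd u) + 1 \<le> real b ^ m"
    using assms(3,4) by (metis Suc_leI of_nat_Suc of_nat_le_iff of_nat_power add.commute)+
  ultimately have "0 \<le> real b ^ m * fst q" "real b ^ m * fst q < real b ^ m * 1"
    "0 \<le> real b ^ m * snd q" "real b ^ m * snd q < real b ^ m * 1" by auto
  thus "q \<in> unit_sq" unfolding unit_sq_def using B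
    by (simp add: zero_le_mult_iff mult_less_cancel_left_pos)
qed

lemma corner:
  assumes "b > 0"
  shows "(real (fst u) / real b ^ m, real (snd u) / real b ^ m) \<in> elem_int b (m,m) u"
  using assms by (simp add: mem_elem_int)

lemma ci_floor:
  assumes "b > 0" "p \<in> unit_sq"
  shows "int (fst (ci b m p)) = \<lfloor>real b ^ m * fst p\<rfloor>" "int (snd (ci b m p)) = \<lfloor>real b ^ m * snd p\<rfloor>"
  using assms unfolding ci_def unit_sq_def by auto

lemma ci_bound:
  assumes "b > 0" "p \<in> unit_sq"
  shows "fst (ci b m p) < b^m" "snd (ci b m p) < b^m"
proof -
  have B: "real b ^ m > 0" using assms by simp
  have "0 \<le> real b ^ m * fst p" "real b ^ m * fst p < real b ^ m"
       "0 \<le> real b ^ m * snd p" "real b ^ m * snd p < real b ^ m"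
    using assms(2) B unfolding unit_sq_def by (auto simp: mult_less_cancel_left_pos)
  hence "\<lfloor>real b ^ m * fst p\<rfloor> < int (b^m)" "\<lfloor>real b ^ m * snd p\<rfloor> < int (b^m)"
    by (simp_all add: floor_less_iff)
  hence "int (fst (ci b m p)) < int (b^m)" "int (snd (ci b m p)) < int (b^m)"
    using ci_floor[OF assms] by simp_all
  thus "fst (ci b m p) < b^m" "snd (ci b m p) < b^m" by simp_all
qed

lemma lemA:
  assumes b2: "b \<ge> 2" and u: "fst u < b^m" "snd u < b^m" and p: "p \<in> unit_sq"
  shows "p \<in> \<Union> (Em b m (elem_int b (m,m) u)) \<longleftrightarrow> clash b m u (ci b m p)"
proof -
  have b0: "b > 0" using b2 by simp
  have p0: "0 \<le> fst p" "0 \<le> snd p" using p unfolding unit_sq_def by auto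
  define v where "v = ci b m p"
  have vf: "int (fst v) = \<lfloor>real b ^ m * fst p\<rfloor>" "int (snd v) = \<lfloor>real b ^ m * snd p\<rfloor>"
    using ci_floor[OF b0 p] v_def by auto
  define c where "c = (real (fst u) / real b ^ m, real (snd u) / real b ^ m)"
  have cf: "\<lfloor>real b ^ m * fst c\<rfloor> = int (fst u)" "\<lfloor>real b ^ m * snd c\<rfloor> = int (snd u)"
    using corner[OF b0, of u m] mem_elem_int[OF b0] unfolding c_def[symmetric] by auto
  show ?thesis
  proof
    assume "p \<in> \<Union> (Em b m (elem_int b (m,m) u))"
    then obtain d a where da: "fst a < b ^ fst d" "snd a < b ^ snd d"
      "elem_vol b d = 1 / real b ^ m" "elem_int b (m,m) u \<subseteq> elem_int b d a" "p \<in> elem_int b d a"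
      unfolding Em_def by blast
    have "real b ^ (fst d + snd d) = real b ^ m" using da(3) b0 unfolding elem_vol_def by (simp add: field_simps)
    hence dm: "fst d + snd d = m" using b2 by (subst (asm) power_inject_exp) auto
    have cE: "c \<in> elem_int b d a" using da(4) corner[OF b0] unfolding c_def by blast
    define k where "k = snd d"
    have k: "k \<le> m" "fst d = m - k" using dm k_def by auto
    have "int (fst a) = \<lfloor>real b ^ fst d * fst c\<rfloor>" using cE mem_elem_int[OF b0] by auto
    also have "\<dots> = int (fst u) div int (b^k)" using fl[OF b0, of "fst d" m] k cf by simp
    finally have a1: "int (fst a) = int (fst u) div int (b^k)" .
    have "int (fst a) = \<lfloor>real b ^ fst d * fst p\<rfloor>" using da(5) mem_elem_int[OF b0] by auto
    also have "\<dots> = int (fst v) div int (b^k)" using fl[OF b0, of "fst d" m] k vf by simp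
    finally have a1': "int (fst a) = int (fst v) div int (b^k)" .
    have "int (snd a) = \<lfloor>real b ^ snd d * snd c\<rfloor>" using cE mem_elem_int[OF b0] by auto
    also have "\<dots> = int (snd u) div int (b^(m-k))" using fl[OF b0, of "snd d" m] k k_def cf by simp
    finally have a2: "int (snd a) = int (snd u) div int (b^(m-k))" .
    have "int (snd a) = \<lfloor>real b ^ snd d * snd p\<rfloor>" using da(5) mem_elem_int[OF b0] by auto
    also have "\<dots> = int (snd v) div int (b^(m-k))" using fl[OF b0, of "snd d" m] k k_def vf by simp
    finally have a2': "int (snd a) = int (snd v) div int (b^(m-k))" .
    have "fst u div b^k = fst v div b^k" "snd u div b^(m-k) = snd v div b^(m-k)"
      using a1 a1' a2 a2' unfolding zdiv_int[symmetric] by simp_all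
    thus "clash b m u (ci b m p)" unfolding clash_def v_def[symmetric] using k(1) by blast
  next
    assume "clash b m u (ci b m p)"
    then obtain k where k: "k \<le> m" "fst u div b^k = fst v div b^k" "snd u div b^(m-k) = snd v div b^(m-k)"
      unfolding clash_def v_def by blast
    define d where "d = (m-k, k)"
    define a where "a = (fst u div b^k, snd u div b^(m-k))"
    have bm: "b^m = b^(m-k) * b^k" "b^m = b^k * b^(m-k)" using k by (simp_all add: power_add[symmetric])
    have a_b: "fst a < b ^ fst d" "snd a < b ^ snd d"
      unfolding a_def d_def using u bm
      by (simp_all add: less_mult_imp_div_less) (metis less_mult_imp_div_less mult.commute)
    have vol: "elem_vol b d = 1 / real b ^ m" unfolding elem_vol_def d_def using k by simp
    have flx: "\<lfloor>real b ^ (m-k) * t\<rfloor> = \<lfloor>real b ^ m * t\<rfloor> div int (b^k)" for t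
      using fl[OF b0, of "m-k" m t] k by simp
    have fly: "\<lfloor>real b ^ k * t\<rfloor> = \<lfloor>real b ^ m * t\<rfloor> div int (b^(m-k))" for t
      using fl[OF b0, of k m t] k by simp
    have sub: "elem_int b (m,m) u \<subseteq> elem_int b d a"
    proof
      fix q assume q: "q \<in> elem_int b (m,m) u"
      hence "\<lfloor>real b ^ m * fst q\<rfloor> = int (fst u)" "\<lfloor>real b ^ m * snd q\<rfloor> = int (snd u)"
        using mem_elem_int[OF b0] by auto
      thus "q \<in> elem_int b d a" unfolding mem_elem_int[OF b0] d_def a_def
        using flx fly by (simp add: zdiv_int)
    qed
    have "p \<in> elem_int b d a" unfolding mem_elem_int[OF b0] d_def a_def
      using flx fly vf k by (simp add: zdiv_int)
    moreover have "elem_int b d a \<in> Em b m (elem_int b (m,m) u)"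
      unfolding Em_def using a_b vol sub by blast
    ultimately show "p \<in> \<Union> (Em b m (elem_int b (m,m) u))" by blast
  qed
qed



lemma U_after_eq: "U_after b m xs = unit_sq - \<Union> (\<Union>X\<in>set xs. Em b m X)"
proof (induction xs rule: rev_induct)
  case Nil thus ?case by (simp add: U_after_def)
next
  case (snoc x xs)
  have "U_after b m (xs @ [x]) = U_step b m (U_after b m xs) x" by (simp add: U_after_def)
  thus ?case using snoc by (auto simp: U_step_def)
qed

lemma grid_list:
  "(\<forall>X\<in>set xs. X \<in> grid_boxes b m) \<Longrightarrow> \<exists>us. xs = map (elem_int b (m,m)) us \<and> (\<forall>u\<in>set us. fst u < b^m \<and> snd u < b^m)"
proof (induction xs)
  case Nil thus ?case by auto
next
  case (Cons X xs)
  then obtain us where us: "xs = map (elem_int b (m,m)) us" "\<forall>u\<in>set us. fst u < b^m \<and> snd u < b^m" by auto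
  from Cons.prems obtain u where u: "X = elem_int b (m,m) u" "fst u < b^m" "snd u < b^m"
    unfolding grid_boxes_def by auto
  show ?case using us u by (intro exI[of _ "u # us"]) auto
qed

lemma U_mem:
  assumes "b \<ge> 2" "\<forall>u\<in>set us. fst u < b^m \<and> snd u < b^m" "p \<in> unit_sq"
  shows "p \<in> U_after b m (map (elem_int b (m,m)) us) \<longleftrightarrow> (\<forall>u\<in>set us. \<not> clash b m u (ci b m p))"
  using assms lemA[OF assms(1) _ _ assms(3)] unfolding U_after_eq by auto

lemma clash_snd:
  assumes "fst u < b^m" "fst v < b^m" "snd u = snd v"
  shows "clash b m u v"
  unfolding clash_def using assms by (intro exI[of _ m]) auto

theorem mainTheorem5:
  fixes b m :: nat and xs :: "(real \<times> real) set list"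
  assumes "b \<ge> 2"
    and "valid_run b m xs"
  shows "length xs \<le> b ^ m
     \<and> (U_after b m xs = {} \<longleftrightarrow> length xs = b ^ m)
     \<and> (U_after b m xs \<noteq> {} \<longrightarrow> (\<exists>X \<in> grid_boxes b m. X \<subseteq> U_after b m xs))"
proof -
  have b0: "b > 0" using assms(1) by simp
  have vr: "\<And>i. i < length xs \<Longrightarrow> xs ! i \<in> grid_boxes b m \<and> xs ! i \<subseteq> U_after b m (take i xs)"
    using assms(2) unfolding valid_run_def by blast
  have "\<forall>X\<in>set xs. X \<in> grid_boxes b m" using vr by (metis in_set_conv_nth)
  then obtain us where us: "xs = map (elem_int b (m,m)) us" and ub: "\<forall>u\<in>set us. fst u < b^m \<and> snd u < b^m"
    using grid_list by blast
  have len: "length xs = length us" using us by simp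
  have nc: "\<not> clash b m (us ! i) (us ! j)" if ij: "i < j" "j < length us" for i j
  proof -
    have ujb: "fst (us!j) < b^m" "snd (us!j) < b^m" using ub ij by auto
    define c where "c = (real (fst (us!j)) / real b ^ m, real (snd (us!j)) / real b ^ m)"
    have cc: "c \<in> elem_int b (m,m) (us!j)" unfolding c_def using corner[OF b0] .
    have "xs ! j \<subseteq> U_after b m (take j xs)" using vr ij len by simp
    moreover have "xs ! j = elem_int b (m,m) (us!j)" using us ij by simp
    moreover have "take j xs = map (elem_int b (m,m)) (take j us)" using us by (simp add: take_map)
    ultimately have "c \<in> U_after b m (map (elem_int b (m,m)) (take j us))" using cc by auto
    moreover have "c \<in> unit_sq" "ci b m c = us!j" using ci_cell[OF b0 cc ujb] by auto
    moreover have "\<forall>u\<in>set (take j us). fst u < b^m \<and> snd u < b^m" using ub by (meson in_set_takeD)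
    moreover have "us ! i \<in> set (take j us)" using ij by (metis in_set_conv_nth length_take min.absorb4 nth_take order.strict_trans)
    ultimately show ?thesis using U_mem[OF assms(1)] by metis
  qed
  have dist: "distinct us"
    unfolding distinct_conv_nth
  proof (intro allI impI)
    fix i j assume h: "i < length us" "j < length us" "i \<noteq> j"
    show "us ! i \<noteq> us ! j"
    proof (cases "i < j")
      case True thus ?thesis using nc[OF True h(2)] clash_refl by metis
    next
      case False hence "j < i" using h by simp
      thus ?thesis using nc[OF _ h(1)] clash_refl by metis
    qed
  qed
  have pw: "\<forall>u\<in>set us. \<forall>v\<in>set us. u \<noteq> v \<longrightarrow> \<not> clash b m u v"
  proof (intro ballI impI)
    fix u v assume uv: "u \<in> set us" "v \<in> set us" "u \<noteq> v"
    then obtain i j where ij: "i < length us" "j < length us" "u = us!i" "v = us!j" by (metis in_set_conv_nth)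
    hence "i \<noteq> j" using uv by auto
    show "\<not> clash b m u v"
    proof (cases "i < j")
      case True thus ?thesis using nc[OF True ij(2)] ij by simp
    next
      case False hence "j < i" using \<open>i \<noteq> j\<close> by simp
      thus ?thesis using nc[OF _ ij(1)] ij clash_sym by metis
    qed
  qed
  have injs: "inj_on snd (set us)"
  proof (rule inj_onI)
    fix u v assume uv: "u \<in> set us" "v \<in> set us" "snd u = snd v"
    show "u = v" using pw uv clash_snd[of u b m v] ub by metis
  qed
  have sub: "snd ` set us \<subseteq> {..<b^m}" using ub by auto
  have cardeq: "length xs = card (snd ` set us)"
    using len distinct_card[OF dist] card_image[OF injs] by simp
  have le: "length xs \<le> b^m" using cardeq card_mono[OF _ sub] by simp
  have full: "U_after b m xs = {}" if eq: "length xs = b^m"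
  proof -
    have "snd ` set us = {..<b^m}" using sub eq cardeq by (intro card_subset_eq) auto
    show ?thesis
    proof (rule ccontr)
      assume "U_after b m xs \<noteq> {}"
      then obtain p where p: "p \<in> U_after b m xs" by auto
      have pu: "p \<in> unit_sq" using p unfolding U_after_eq by auto
      have cb: "fst (ci b m p) < b^m" "snd (ci b m p) < b^m" using ci_bound[OF b0 pu] by auto
      then obtain u where u: "u \<in> set us" "snd u = snd (ci b m p)"
        using \<open>snd ` set us = {..<b^m}\<close> by (metis imageE lessThan_iff)
      have "clash b m u (ci b m p)" using clash_snd[of u b m "ci b m p"] u ub cb by auto
      thus False using p U_mem[OF assms(1) ub pu] us u by auto
    qed
  qed
  have notfull: "\<exists>X \<in> grid_boxes b m. X \<subseteq> U_after b m xs \<and> X \<noteq> {}" if lt: "length xs < b^m"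
  proof -
    have "\<not> {..<b^m} \<subseteq> snd ` set us"
    proof
      assume "{..<b^m} \<subseteq> snd ` set us"
      hence "b^m \<le> card (snd ` set us)" using card_mono[of "snd ` set us" "{..<b^m}"] by simp
      thus False using lt cardeq by simp
    qed
    then obtain y0 where y0: "y0 < b^m" "y0 \<notin> snd ` set us" by auto
    have S: "set us \<subseteq> {..<b^m} \<times> {..<b^m}" using ub by auto
    obtain x where x: "x < b^m" "\<forall>u\<in>set us. \<not> clash b m u (x, y0)"
      using free_exists[OF b0, of m, THEN spec[of _ "set us"], THEN spec[of _ y0]] S pw y0 by blast
    define X where "X = elem_int b (m,m) (x,y0)"
    have XG: "X \<in> grid_boxes b m" unfolding X_def grid_boxes_def using x y0 by auto
    have "X \<subseteq> U_after b m xs"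
    proof
      fix q assume q: "q \<in> X"
      have "q \<in> unit_sq" "ci b m q = (x,y0)" using ci_cell[OF b0 q[unfolded X_def]] x y0 by auto
      thus "q \<in> U_after b m xs" using U_mem[OF assms(1) ub] x us by auto
    qed
    moreover have "X \<noteq> {}" using corner[OF b0, of "(x,y0)" m] X_def by auto
    ultimately show ?thesis using XG by blast
  qed
  show ?thesis
  proof (intro conjI)
    show "length xs \<le> b^m" by (rule le)
    show "U_after b m xs = {} \<longleftrightarrow> length xs = b ^ m"
      using full notfull le by fastforce
    show "U_after b m xs \<noteq> {} \<longrightarrow> (\<exists>X\<in>grid_boxes b m. X \<subseteq> U_after b m xs)"
      using full notfull le by fastforce
  qed
qed


end
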